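(* Assume $I_\delta=0$. There exists a constant $C_L$, independent of $\delta$ (and of $c\in[c_0,c_1]$ and $R_0\in\mathcal{R}_c$), such that for all $\delta$-admissible $S_1,S_2\in\mathsf{X}$ and $G_\ell=\mathcal{G}(S_\ell)$, $\ell=1,2$, $$\|\mathcal{A}^2G_2-\mathcal{A}^2G_1\|_\infty+\|\mathcal{A}G_2-\mathcal{A}G_1\|_\infty+\delta\|G_2-G_1\|_\infty\le C_L\,\delta\,\|S_2'-S_1'\|_\infty .$$
   Context: $(\mathcal{A}F)(x)=\int_{x-1/2}^{x+1/2}F(s)\,ds$, $\Delta_1F(x)=F(x+1)-2F(x)+F(x-1)$, $a(k)=\frac{\sin(k/2)}{k/2}$, $\Psi_0'(r)=\mathrm{sgn}(r)$. Potentials: $(\Psi_\delta)_{\delta>0}$ is a family of $C^2$ functions such that $\Psi_\delta'(r)=\mathrm{sgn}(r)$ for $r\notin(-\delta,\delta)$, and $|\Psi_\delta'|\le C_\Psi$, $|\Psi_\delta''|\le C_\Psi/\delta$ on $\mathbb{R}$ with $C_\Psi$ independent of $\delta$; $I_\delta:=\frac12\int_{\mathbb{R}}(\Psi_\delta'-\Psi_0')\,dr$. Unperturbed waves (standing hypothesis, a known result): there are constants $0<c_0<1$ and $x_0,r_0,d_0,D_0>0$ such that for every $c\in[c_0,1)$ the equation $a(k)=c$ has exactly one positive solution $k_c$, and there is a two-parameter family $\mathcal{R}_c$ of functions $R_0\in W^{2,\infty}(\mathbb{R})$ solving $c^2R_0''=\Delta_1(R_0-\mathrm{sgn}(R_0))$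 with $R_0(0)=0$, given by $R_0=\bar R_0+\alpha(\cos(k_c\cdot)-1)+\beta\sin(k_c\cdot)$, $(\alpha,\beta)$ in an open neighbourhood $U_c$ of $0\in\mathbb{R}^2$, where $\bar R_0$ is a fixed member for which $\lim_{x\to+\infty}\bar R_0(x)$ exists and $\lim_{x\to-\infty}(\bar R_0(x)-\alpha_c^-(\cos(k_cx)-1)-\beta_c^-\sin(k_cx))$ exists for some constants $\alpha_c^-,\beta_c^-$. Every $R_0\in\mathcal{R}_c$ satisfies $\|R_0\|_\infty\le D_0(1-c^2)^{-1}$, $R_0(x)>r_0$ for $x>x_0$, $R_0(x)<-r_0$ for $x<-x_0$, $R_0'(x)>d_0$ for $|x|<x_0$. Setting: $c_1\in(c_0,1)$ fixed, $c\in[c_0,c_1]$, $R_0\in\mathcal{R}_c$ fixed. $\mathsf{X}:=\{S\in W^{2,\infty}(\mathbb{R}):S(0)=0,\ \lim_{x\to+\infty}S(x)\text{ exists}\}$. $\mathcal{G}(S)(x):=\Psi_\delta'(R_0(x)+S(x))-\Psi_0'(R_0(x))$. $S\in\mathsf{X}$ is called $\delta$-admissible if there exist $x_-<0<x_+$ with: $R_0(x_\pm)+S(x_\pm)=\pm\delta$; $R_0(x)+S(x)<-\delta$ for $x<x_-$; $R_0(x)+S(x)>\delta$ for $x>x_+$; and $\frac12R_0'(0)<R_0'(x)+S'(x)<2R_0'(0)$ for $x_-<x<x_+$. *)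

theory Defs
  imports "HOL-Analysis.Analysis"
begin

definition Aop :: "(real \<Rightarrow> real) \<Rightarrow> real \<Rightarrow> real" where
  "Aop F x = integral {x - 1/2 .. x + 1/2} F"

definition Delta1 :: "(real \<Rightarrow> real) \<Rightarrow> real \<Rightarrow> real" where
  "Delta1 F x = F (x + 1) - 2 * F x + F (x - 1)"

definition afun :: "real \<Rightarrow> real" where
  "afun k = sin (k / 2) / (k / 2)"

definition supn :: "(real \<Rightarrow> real) \<Rightarrow> real" where
  "supn f = (SUP x. \<bar>f x\<bar>)"

definition W2inf :: "(real \<Rightarrow> real) \<Rightarrow> bool" where
  "W2inf f \<longleftrightarrow> (\<forall>x. f differentiable at x) \<and> bounded (range f)
      \<and> bounded (range (deriv f)) \<and> (\<exists>L. L-lipschitz_on UNIV (deriv f))"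

definition Xsp :: "(real \<Rightarrow> real) set" where
  "Xsp = {S. W2inf S \<and> S 0 = 0 \<and> (\<exists>L. (S \<longlongrightarrow> L) at_top)}"

definition potential_family :: "(real \<Rightarrow> real \<Rightarrow> real) \<Rightarrow> real \<Rightarrow> bool" where
  "potential_family Psi CPsi \<longleftrightarrow> (\<forall>\<delta>>0.
      (\<forall>r. Psi \<delta> differentiable at r) \<and> (\<forall>r. deriv (Psi \<delta>) differentiable at r)
      \<and> continuous_on UNIV (deriv (deriv (Psi \<delta>)))
      \<and> (\<forall>r. \<bar>r\<bar> \<ge> \<delta> \<longrightarrow> deriv (Psi \<delta>) r = sgn r)
      \<and> (\<forall>r. \<bar>deriv (Psi \<delta>) r\<bar> \<le> CPsi)
      \<and> (\<forall>r. \<bar>deriv (deriv (Psi \<delta>)) r\<bar> \<le> CPsi / \<delta>))"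

text \<open>I_delta = 1/2 * integral over R of (Psi_delta' - Psi_0'), with Psi_0' = sgn.\<close>
definition Ifun :: "(real \<Rightarrow> real \<Rightarrow> real) \<Rightarrow> real \<Rightarrow> real" where
  "Ifun Psi \<delta> = 1/2 * integral UNIV (\<lambda>r. deriv (Psi \<delta>) r - sgn r)"

text \<open>Standing hypothesis on unperturbed waves. kc c is the unique positive solution
  of a(k) = c, Rbar c the fixed member and Rfam c the family R_c.\<close>
definition unperturbed_waves ::
  "real \<Rightarrow> real \<Rightarrow> real \<Rightarrow> real \<Rightarrow> real \<Rightarrow> (real \<Rightarrow> real) \<Rightarrow> (real \<Rightarrow> real \<Rightarrow> real)
     \<Rightarrow> (real \<Rightarrow> (real \<Rightarrow> real) set) \<Rightarrow> bool" where
  "unperturbed_waves c0 x0 r0 d0 D0 kc Rbar Rfam \<longleftrightarrow>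
     0 < c0 \<and> c0 < 1 \<and> x0 > 0 \<and> r0 > 0 \<and> d0 > 0 \<and> D0 > 0 \<and>
     (\<forall>c. c0 \<le> c \<and> c < 1 \<longrightarrow>
        kc c > 0 \<and> afun (kc c) = c \<and> (\<forall>k>0. afun k = c \<longrightarrow> k = kc c) \<and>
        (\<exists>U::(real \<times> real) set. open U \<and> (0, 0) \<in> U \<and>
           Rfam c = {(\<lambda>x. Rbar c x + \<alpha> * (cos (kc c * x) - 1) + \<beta> * sin (kc c * x)) | \<alpha> \<beta>. (\<alpha>, \<beta>) \<in> U}) \<and>
        (\<exists>L. (Rbar c \<longlongrightarrow> L) at_top) \<and>
        (\<exists>\<alpha>m \<beta>m L. ((\<lambda>x. Rbar c x - \<alpha>m * (cos (kc c * x) - 1) - \<beta>m * sin (kc c * x))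
                        \<longlongrightarrow> L) at_bot) \<and>
        (\<forall>R0\<in>Rfam c.
           W2inf R0 \<and> R0 0 = 0 \<and>
           (AE x in lborel. (deriv R0 has_real_derivative
                Delta1 (\<lambda>y. R0 y - sgn (R0 y)) x / c\<^sup>2) (at x)) \<and>
           (\<forall>x. \<bar>R0 x\<bar> \<le> D0 / (1 - c\<^sup>2)) \<and>
           (\<forall>x>x0. R0 x > r0) \<and> (\<forall>x. x < - x0 \<longrightarrow> R0 x < - r0) \<and>
           (\<forall>x. \<bar>x\<bar> < x0 \<longrightarrow> deriv R0 x > d0)))"

definition Gop :: "(real \<Rightarrow> real \<Rightarrow> real) \<Rightarrow> real \<Rightarrow> (real \<Rightarrow> real) \<Rightarrow> (real \<Rightarrow> real) \<Rightarrow> real \<Rightarrow> real" where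
  "Gop Psi \<delta> R0 S x = deriv (Psi \<delta>) (R0 x + S x) - sgn (R0 x)"

definition admissible :: "real \<Rightarrow> (real \<Rightarrow> real) \<Rightarrow> (real \<Rightarrow> real) \<Rightarrow> bool" where
  "admissible \<delta> R0 S \<longleftrightarrow> S \<in> Xsp \<and> (\<exists>xm xp. xm < 0 \<and> 0 < xp \<and>
      R0 xm + S xm = - \<delta> \<and> R0 xp + S xp = \<delta> \<and>
      (\<forall>x<xm. R0 x + S x < - \<delta>) \<and> (\<forall>x>xp. R0 x + S x > \<delta>) \<and>
      (\<forall>x. xm < x \<and> x < xp \<longrightarrow>
          deriv R0 0 / 2 < deriv R0 x + deriv S x \<and> deriv R0 x + deriv S x < 2 * deriv R0 0))"

end

theory Submission
  imports Defs
begin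

lemma sgn_int: fixes R :: "real\<Rightarrow>real" assumes "continuous_on UNIV R"
  shows "(\<lambda>x. sgn (R x)) integrable_on {a..b}"
proof (rule measurable_bounded_by_integrable_imp_integrable_real[where g="\<lambda>_. 1"])
  have "R \<in> borel_measurable (lebesgue_on {a..b})"
    by (rule continuous_imp_measurable_on_sets_lebesgue) (auto intro: continuous_on_subset[OF assms])
  then show "(\<lambda>x. sgn (R x)) \<in> borel_measurable (lebesgue_on {a..b})"
    by (rule measurable_compose[OF _ borel_measurable_sgn])
qed (auto simp: sgn_if)

lemma lip_deriv:
  fixes f f' :: "real \<Rightarrow> real"
  assumes d: "\<And>x. (f has_real_derivative f' x) (at x)" and b: "\<And>x. \<bar>f' x\<bar> \<le> L"
  shows "\<bar>f a - f b\<bar> \<le> L * \<bar>a - b\<bar>"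
proof -
  have *: "\<bar>f y - f x\<bar> \<le> L * \<bar>y - x\<bar>" if xy: "x < y" for x y
  proof -
    obtain z where "f y - f x = (y - x) * f' z"
      using MVT2[OF xy, of f f'] d by blast
    then have "\<bar>f y - f x\<bar> = \<bar>y - x\<bar> * \<bar>f' z\<bar>" by (simp add: abs_mult)
    also have "\<dots> \<le> \<bar>y - x\<bar> * L" by (rule mult_left_mono[OF b]) simp
    finally show ?thesis by (simp add: mult.commute)
  qed
  show ?thesis
  proof (cases a b rule: linorder_cases)
    case less then show ?thesis using *[OF less] by (simp add: abs_minus_commute)
  next
    case greater then show ?thesis using *[OF greater] by simp
  qed simp
qed

lemma window_supp:
  fixes H :: "real \<Rightarrow> real"
  assumes c: "continuous_on UNIV H" and z: "\<And>t. r < \<bar>t\<bar> \<Longrightarrow> H t = 0"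
    and b: "\<And>t. \<bar>H t\<bar> \<le> K" and r: "0 \<le> r"
  shows "\<bar>integral {x-1/2..x+1/2} H\<bar> \<le> 2*r*K"
proof -
  have K: "0 \<le> K" using b[of 0] by linarith
  have "integral {x-1/2..x+1/2} H = integral {x-1/2..x+1/2} (\<lambda>t. if t \<in> {-r..r} then H t else 0)"
    by (rule integral_cong) (auto intro!: z)
  also have "\<dots> = integral ({-r..r} \<inter> {x-1/2..x+1/2}) H" by (rule integral_restrict_Int)
  also have "{-r..r} \<inter> {x-1/2..x+1/2} = {max (-r) (x-1/2) .. min r (x+1/2)}" by auto
  finally have eq: "integral {x-1/2..x+1/2} H = integral {max (-r) (x-1/2) .. min r (x+1/2)} H" .
  show ?thesis
  proof (cases "max (-r) (x-1/2) \<le> min r (x+1/2)")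
    case True
    have "norm (integral {max (-r) (x-1/2) .. min r (x+1/2)} H) \<le> K * (min r (x+1/2) - max (-r) (x-1/2))"
      by (rule integral_bound[OF True]) (auto intro: continuous_on_subset[OF c] b)
    also have "\<dots> \<le> K * (2*r)" by (rule mult_left_mono[OF _ K]) auto
    finally show ?thesis using eq by (simp add: mult_ac)
  next
    case False
    then show ?thesis using eq K r by simp
  qed
qed

lemma D_cont:
  fixes H :: "real \<Rightarrow> real"
  assumes c: "continuous_on UNIV H" and ab: "a \<le> b"
  shows "continuous_on {a..b} (\<lambda>x. integral {x-1/2..x+1/2} H)"
proof -
  define F where "F x = integral {a-1..x} H" for x
  have int: "H integrable_on {u..v}" for u v
    by (rule integrable_continuous_real) (auto intro: continuous_on_subset[OF c])
  have Fc: "continuous_on {a-1..b+1} F"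
    unfolding F_def by (rule indefinite_integral_continuous_1[OF int])
  have eq: "integral {x-1/2..x+1/2} H = F (x+1/2) - F (x-1/2)" if "x \<in> {a..b}" for x
  proof -
    have "integral {a-1..x-1/2} H + integral {x-1/2..x+1/2} H = integral {a-1..x+1/2} H"
      by (rule Henstock_Kurzweil_Integration.integral_combine[where a="a-1" and c="x-1/2" and b="x+1/2" and f=H]) (use that in \<open>auto intro: int\<close>)
    then show ?thesis unfolding F_def by linarith
  qed
  have "continuous_on {a..b} (\<lambda>x. F (x+1/2) - F (x-1/2))"
  proof (intro continuous_on_diff)
    show "continuous_on {a..b} (\<lambda>x. F (x+1/2))"
      by (rule continuous_on_compose2[OF Fc, where f="\<lambda>x. x+1/2"]) (auto intro!: continuous_intros)
    show "continuous_on {a..b} (\<lambda>x. F (x-1/2))"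
      by (rule continuous_on_compose2[OF Fc, where f="\<lambda>x. x-1/2"]) (auto intro!: continuous_intros)
  qed
  then show ?thesis by (rule continuous_on_eq) (use eq in \<open>simp del: atLeastAtMost_iff\<close>)
qed


lemma adm_region:
  fixes R0 S :: "real \<Rightarrow> real"
  assumes adm: "admissible \<delta> R0 S" and WR: "W2inf R0" and R00: "R0 0 = 0"
    and dR: "deriv R0 0 > d0" and d0: "d0 > 0" and dl: "\<delta> > 0"
  shows "\<forall>x. x \<ge> 2*\<delta>/d0 \<longrightarrow> R0 x + S x > \<delta>"
    and "\<forall>x. x \<le> -(2*\<delta>/d0) \<longrightarrow> R0 x + S x < -\<delta>"
proof -
  from adm have SX: "S \<in> Xsp" unfolding admissible_def by blast
  then have WS: "W2inf S" and S0: "S 0 = 0" unfolding Xsp_def by auto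
  from adm obtain xm xp where xm: "xm < 0" and xp: "0 < xp" and fm: "R0 xm + S xm = - \<delta>"
     and fp: "R0 xp + S xp = \<delta>" and lt: "\<forall>x<xm. R0 x + S x < - \<delta>" and gt: "\<forall>x>xp. R0 x + S x > \<delta>"
     and sl: "\<forall>x. xm < x \<and> x < xp \<longrightarrow>
          deriv R0 0 / 2 < deriv R0 x + deriv S x \<and> deriv R0 x + deriv S x < 2 * deriv R0 0"
    unfolding admissible_def by blast
  have D: "((\<lambda>x. R0 x + S x) has_real_derivative (deriv R0 x + deriv S x)) (at x)" for x
  proof -
    have "R0 differentiable at x" "S differentiable at x" using WR WS unfolding W2inf_def by auto
    then show ?thesis
      by (intro derivative_intros) (auto simp: DERIV_deriv_iff_real_differentiable)
  qed
  obtain z where z: "0 < z" "z < xp" "(R0 xp + S xp) - (R0 0 + S 0) = (xp - 0) * (deriv R0 z + deriv S z)"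
    using MVT2[OF xp, of "\<lambda>x. R0 x + S x" "\<lambda>x. deriv R0 x + deriv S x"] D by blast
  have "deriv R0 z + deriv S z > deriv R0 0 / 2" using sl z xm by auto
  then have "deriv R0 z + deriv S z > d0/2" using dR by linarith
  then have "xp * (d0/2) < xp * (deriv R0 z + deriv S z)" using xp by (intro mult_strict_left_mono) auto
  then have "xp * d0 < 2 * \<delta>" using z fp R00 S0 by simp
  then have xpb: "xp < 2*\<delta>/d0" using d0 by (simp add: field_simps)
  show "\<forall>x. x \<ge> 2*\<delta>/d0 \<longrightarrow> R0 x + S x > \<delta>" using gt xpb by force
  obtain w where w: "xm < w" "w < 0" "(R0 0 + S 0) - (R0 xm + S xm) = (0 - xm) * (deriv R0 w + deriv S w)"
    using MVT2[OF xm, of "\<lambda>x. R0 x + S x" "\<lambda>x. deriv R0 x + deriv S x"] D by blast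
  have "deriv R0 w + deriv S w > deriv R0 0 / 2" using sl w xp by auto
  then have "deriv R0 w + deriv S w > d0/2" using dR by linarith
  then have "(-xm) * (d0/2) < (-xm) * (deriv R0 w + deriv S w)" using xm by (intro mult_strict_left_mono) auto
  then have "(-xm) * d0 < 2 * \<delta>" using w fm R00 S0 by simp
  then have xmb: "-xm < 2*\<delta>/d0" using d0 by (simp add: field_simps)
  show "\<forall>x. x \<le> -(2*\<delta>/d0) \<longrightarrow> R0 x + S x < -\<delta>" using lt xmb by force
qed


theorem lemma3p5:
  fixes Psi :: "real \<Rightarrow> real \<Rightarrow> real" and CPsi c0 c1 x0 r0 d0 D0 :: real
    and kc :: "real \<Rightarrow> real" and Rbar :: "real \<Rightarrow> real \<Rightarrow> real"
    and Rfam :: "real \<Rightarrow> (real \<Rightarrow> real) set"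
  assumes "potential_family Psi CPsi"
    and "unperturbed_waves c0 x0 r0 d0 D0 kc Rbar Rfam"
    and "c0 < c1" and "c1 < 1"
  shows "\<exists>CL. \<forall>\<delta>>0. \<forall>c\<in>{c0..c1}. \<forall>R0\<in>Rfam c. \<forall>S1 S2.
           Ifun Psi \<delta> = 0 \<longrightarrow> admissible \<delta> R0 S1 \<longrightarrow> admissible \<delta> R0 S2 \<longrightarrow>
           supn (\<lambda>x. Aop (Aop (Gop Psi \<delta> R0 S2)) x - Aop (Aop (Gop Psi \<delta> R0 S1)) x)
           + supn (\<lambda>x. Aop (Gop Psi \<delta> R0 S2) x - Aop (Gop Psi \<delta> R0 S1) x)
           + \<delta> * supn (\<lambda>x. Gop Psi \<delta> R0 S2 x - Gop Psi \<delta> R0 S1 x)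
           \<le> CL * \<delta> * supn (\<lambda>x. deriv S2 x - deriv S1 x)"
proof -
  note pf = assms(1)[unfolded potential_family_def]
  note uw = assms(2)[unfolded unperturbed_waves_def]
  have d0: "d0 > 0" using uw by blast
  have x0: "x0 > 0" using uw by blast
  have CP: "CPsi \<ge> 0" using pf[rule_format, of 1] by (meson abs_ge_zero order_trans zero_less_one)
  define K where "K = 2*CPsi/d0"
  have K0: "K \<ge> 0" unfolding K_def using CP d0 by simp
  define CL where "CL = (8/d0 + 1) * K"
  show ?thesis
  proof (intro exI[of _ CL] allI impI ballI)
    fix \<delta> c R0 S1 S2
    assume dl: "(\<delta>::real) > 0" and cI: "c \<in> {c0..c1}" and R0: "R0 \<in> Rfam c"
      and a1: "admissible \<delta> R0 S1" and a2: "admissible \<delta> R0 S2"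
    have "c0 \<le> c \<and> c < 1" using cI assms(4) by auto
    then have Rp: "W2inf R0 \<and> R0 0 = 0 \<and> (\<forall>x. \<bar>x\<bar> < x0 \<longrightarrow> deriv R0 x > d0)"
      using uw R0 by blast
    then have WR: "W2inf R0" and R00: "R0 0 = 0" and dR: "deriv R0 0 > d0" using x0 by auto
    have WS1: "W2inf S1" and S10: "S1 0 = 0" using a1 unfolding admissible_def Xsp_def by auto
    have WS2: "W2inf S2" and S20: "S2 0 = 0" using a2 unfolding admissible_def Xsp_def by auto
    note r1 = adm_region[OF a1 WR R00 dR d0 dl]
    note r2 = adm_region[OF a2 WR R00 dR d0 dl]
    define P where "P = deriv (Psi \<delta>)"
    have Pd: "\<And>r. P differentiable at r" and Pb: "\<And>r. \<bar>deriv P r\<bar> \<le> CPsi/\<delta>"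
      and Ps: "\<And>r. \<bar>r\<bar> \<ge> \<delta> \<Longrightarrow> P r = sgn r"
      using pf dl unfolding P_def by auto
    have Plip: "\<bar>P a - P b\<bar> \<le> CPsi/\<delta> * \<bar>a - b\<bar>" for a b
      by (rule lip_deriv[where f'="deriv P"]) (use Pd Pb in \<open>auto simp: DERIV_deriv_iff_real_differentiable\<close>)
    have dR0: "\<And>x. R0 differentiable at x" using WR unfolding W2inf_def by auto
    have dS1: "\<And>x. S1 differentiable at x" using WS1 unfolding W2inf_def by auto
    have dS2: "\<And>x. S2 differentiable at x" using WS2 unfolding W2inf_def by auto
    obtain B1 where B1: "\<And>x. \<bar>deriv S1 x\<bar> \<le> B1"
      using WS1 unfolding W2inf_def bounded_iff by auto
    obtain B2 where B2: "\<And>x. \<bar>deriv S2 x\<bar> \<le> B2"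
      using WS2 unfolding W2inf_def bounded_iff by auto
    define M where "M = supn (\<lambda>x. deriv S2 x - deriv S1 x)"
    have Mb: "\<bar>deriv S2 x - deriv S1 x\<bar> \<le> M" for x
      unfolding M_def supn_def
    proof (rule cSUP_upper)
      show "bdd_above (range (\<lambda>x. \<bar>deriv S2 x - deriv S1 x\<bar>))"
      proof (rule bdd_aboveI2)
        fix y show "\<bar>deriv S2 y - deriv S1 y\<bar> \<le> B2 + B1" using B1[of y] B2[of y] by linarith
      qed
    qed simp
    have M0: "M \<ge> 0" using Mb[of 0] by linarith
    have Sdiff: "\<bar>S2 x - S1 x\<bar> \<le> M * \<bar>x\<bar>" for x
    proof -
      have "\<bar>(S2 x - S1 x) - (S2 0 - S1 0)\<bar> \<le> M * \<bar>x - 0\<bar>"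
        by (rule lip_deriv[where f="\<lambda>x. S2 x - S1 x" and f'="\<lambda>x. deriv S2 x - deriv S1 x"])
           (use dS1 dS2 Mb in \<open>auto intro!: derivative_intros simp: DERIV_deriv_iff_real_differentiable\<close>)
      then show ?thesis using S10 S20 by simp
    qed
    define r where "r = 2*\<delta>/d0"
    have r0: "r \<ge> 0" unfolding r_def using dl d0 by simp
    define H where "H x = P (R0 x + S2 x) - P (R0 x + S1 x)" for x
    have GH: "Gop Psi \<delta> R0 S2 x - Gop Psi \<delta> R0 S1 x = H x" for x
      unfolding Gop_def H_def P_def by simp
    have Hz: "H t = 0" if "r < \<bar>t\<bar>" for t
    proof (cases "t > 0")
      case True
      then have "t \<ge> 2*\<delta>/d0" using that r_def by auto
      then have "R0 t + S1 t > \<delta>" "R0 t + S2 t > \<delta>" using r1 r2 by auto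
      then show ?thesis unfolding H_def using Ps[of "R0 t + S1 t"] Ps[of "R0 t + S2 t"] dl by auto
    next
      case False
      then have "t \<le> -(2*\<delta>/d0)" using that r_def by auto
      then have "R0 t + S1 t < -\<delta>" "R0 t + S2 t < -\<delta>" using r1 r2 by auto
      then show ?thesis unfolding H_def using Ps[of "R0 t + S1 t"] Ps[of "R0 t + S2 t"] dl by auto
    qed
    have Hb: "\<bar>H t\<bar> \<le> K * M" for t
    proof (cases "r < \<bar>t\<bar>")
      case True then show ?thesis using Hz K0 M0 by simp
    next
      case False
      have "\<bar>H t\<bar> \<le> CPsi/\<delta> * \<bar>S2 t - S1 t\<bar>" unfolding H_def using Plip[of "R0 t + S2 t" "R0 t + S1 t"] by simp
      also have "\<dots> \<le> CPsi/\<delta> * (M * r)"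
      proof (rule mult_left_mono)
        show "\<bar>S2 t - S1 t\<bar> \<le> M * r"
          using Sdiff[of t] mult_left_mono[of "\<bar>t\<bar>" r M] False M0 by linarith
      qed (use CP dl in simp)
      also have "\<dots> = K * M" unfolding K_def r_def using dl d0 by (simp add: field_simps)
      finally show ?thesis .
    qed
    have Pc: "isCont P y" for y using Pd differentiable_imp_continuous_within by blast
    have Hc: "continuous_on UNIV H"
    proof (rule continuous_at_imp_continuous_on, intro ballI)
      fix x :: real
      have cR: "isCont R0 x" "isCont S1 x" "isCont S2 x"
        using dR0 dS1 dS2 differentiable_imp_continuous_within by blast+
      have "isCont (\<lambda>x. P (R0 x + S2 x)) x"
        by (rule isCont_o2[OF _ Pc]) (use cR in \<open>auto intro!: continuous_intros\<close>)
      moreover have "isCont (\<lambda>x. P (R0 x + S1 x)) x"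
        by (rule isCont_o2[OF _ Pc]) (use cR in \<open>auto intro!: continuous_intros\<close>)
      ultimately show "isCont H x" unfolding H_def by (intro continuous_intros)
    qed
    have cR0: "continuous_on UNIV R0"
      using dR0 by (meson continuous_at_imp_continuous_on differentiable_imp_continuous_within)
    have cPS: "continuous_on UNIV (\<lambda>x. P (R0 x + S x))" if "\<And>x. S differentiable at x" for S
    proof (rule continuous_at_imp_continuous_on, intro ballI)
      fix x :: real
      have cR: "isCont R0 x" "isCont S x"
        using dR0 that differentiable_imp_continuous_within by blast+
      show "isCont (\<lambda>x. P (R0 x + S x)) x"
        by (rule isCont_o2[OF _ Pc]) (use cR in \<open>auto intro!: continuous_intros\<close>)
    qed
    have Gint: "(\<lambda>x. P (R0 x + S x) - sgn (R0 x)) integrable_on {a..b}"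
      if "\<And>x. S differentiable at x" for S a b
      by (intro integrable_diff integrable_continuous_real sgn_int[OF cR0]
          continuous_on_subset[OF cPS[OF that]]) auto
    have G1eq: "Gop Psi \<delta> R0 S1 = (\<lambda>x. P (R0 x + S1 x) - sgn (R0 x))"
      unfolding Gop_def P_def by auto
    have G2eq: "Gop Psi \<delta> R0 S2 = (\<lambda>x. P (R0 x + S2 x) - sgn (R0 x))"
      unfolding Gop_def P_def by auto
    define D where "D x = integral {x-1/2..x+1/2} H" for x
    have AD: "Aop (Gop Psi \<delta> R0 S2) x - Aop (Gop Psi \<delta> R0 S1) x = D x" for x
    proof -
      have "Aop (Gop Psi \<delta> R0 S2) x - Aop (Gop Psi \<delta> R0 S1) x
          = integral {x-1/2..x+1/2} (\<lambda>t. Gop Psi \<delta> R0 S2 t - Gop Psi \<delta> R0 S1 t)"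
        unfolding Aop_def G1eq G2eq
        by (rule integral_diff[symmetric]) (intro Gint dS1 dS2)+
      also have "\<dots> = D x" unfolding D_def GH ..
      finally show ?thesis .
    qed
    have Db: "\<bar>D x\<bar> \<le> 2*r*(K*M)" for x
      unfolding D_def by (rule window_supp[OF Hc Hz Hb r0])
    have Dint: "D integrable_on {a..b}" for a b
    proof (cases "a \<le> b")
      case True then show ?thesis
        unfolding D_def by (intro integrable_continuous_real D_cont[OF Hc])
    next
      case False then show ?thesis by (simp add: integrable_on_empty)
    qed
    have AAD: "\<bar>Aop (Aop (Gop Psi \<delta> R0 S2)) x - Aop (Aop (Gop Psi \<delta> R0 S1)) x\<bar> \<le> 2*r*(K*M)" for x
    proof -
      define A1 where "A1 = Aop (Gop Psi \<delta> R0 S1)"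
      define A2 where "A2 = Aop (Gop Psi \<delta> R0 S2)"
      have A2eq: "A2 = (\<lambda>t. A1 t + D t)" using AD unfolding A1_def A2_def by (auto simp: algebra_simps)
      show ?thesis
      proof (cases "A1 integrable_on {x-1/2..x+1/2}")
        case True
        have "Aop A2 x - Aop A1 x = integral {x-1/2..x+1/2} D"
          unfolding Aop_def A2eq using True Dint by (simp add: integral_add)
        moreover have "norm (integral {x-1/2..x+1/2} D) \<le> 2*r*(K*M) * ((x+1/2) - (x-1/2))"
          by (rule integral_bound) (auto intro: D_cont[OF Hc, unfolded D_def[symmetric]] Db)
        ultimately show ?thesis unfolding A1_def A2_def by simp
      next
        case False
        have "\<not> A2 integrable_on {x-1/2..x+1/2}"
        proof
          assume "A2 integrable_on {x-1/2..x+1/2}"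
          then have "(\<lambda>t. A2 t - D t) integrable_on {x-1/2..x+1/2}" using Dint by (intro integrable_diff)
          then show False using False unfolding A2eq by simp
        qed
        then have "Aop A2 x - Aop A1 x = 0" unfolding Aop_def using False by (simp add: not_integrable_integral)
        then show ?thesis unfolding A1_def A2_def using r0 K0 M0 by simp
      qed
    qed
    have s1: "supn (\<lambda>x. Aop (Aop (Gop Psi \<delta> R0 S2)) x - Aop (Aop (Gop Psi \<delta> R0 S1)) x) \<le> 2*r*(K*M)"
      unfolding supn_def by (rule cSUP_least) (use AAD in auto)
    have s2: "supn (\<lambda>x. Aop (Gop Psi \<delta> R0 S2) x - Aop (Gop Psi \<delta> R0 S1) x) \<le> 2*r*(K*M)"
      unfolding supn_def AD by (rule cSUP_least) (use Db in auto)
    have s3: "supn (\<lambda>x. Gop Psi \<delta> R0 S2 x - Gop Psi \<delta> R0 S1 x) \<le> K*M"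
      unfolding supn_def GH by (rule cSUP_least) (use Hb in auto)
    have s3': "\<delta> * supn (\<lambda>x. Gop Psi \<delta> R0 S2 x - Gop Psi \<delta> R0 S1 x) \<le> \<delta> * (K*M)"
      using s3 dl by (intro mult_left_mono) auto
    have "2*r*(K*M) + 2*r*(K*M) + \<delta> * (K*M) = CL * \<delta> * M"
      unfolding CL_def r_def using d0 by (simp add: field_simps)
    then show "supn (\<lambda>x. Aop (Aop (Gop Psi \<delta> R0 S2)) x - Aop (Aop (Gop Psi \<delta> R0 S1)) x)
           + supn (\<lambda>x. Aop (Gop Psi \<delta> R0 S2) x - Aop (Gop Psi \<delta> R0 S1) x)
           + \<delta> * supn (\<lambda>x. Gop Psi \<delta> R0 S2 x - Gop Psi \<delta> R0 S1 x)
           \<le> CL * \<delta> * supn (\<lambda>x. deriv S2 x - deriv S1 x)"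
      using s1 s2 s3' unfolding M_def by linarith
  qed
qed

end
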